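(* Let $\mathcal{H}=(V,E)$ be a hypergraph with no repeated hyperedge, $V=\{v_1,\dots,v_n\}$, of range $k_{\max}\geq 2$, and let $\mathcal{A}_{\mathcal{H}}=(a_{i_1\dots i_{k_{\max}}})$ be its layered e-adjacency tensor (defined in the context). Let $d_i=\deg(v_i)$ for $i\in\{1,\dots,n\}$ and $d_{n+i}=\deg(y_i)$ for $i\in\{1,\dots,k_{\max}-1\}$ (degrees in the layered uniform hypergraph, defined in the context). Then for every $i\in\{1,\dots,n+k_{\max}-1\}$, $$\sum_{\substack{i_2,\dots,i_{k_{\max}}=1\\ \delta_{i i_2\dots i_{k_{\max}}}=0}}^{n+k_{\max}-1} a_{i i_2\dots i_{k_{\max}}} = d_i,$$ where $\delta_{i i_2\dots i_{k_{\max}}}$ equals $1$ if $i=i_2=\dots=i_{k_{\max}}$ and $0$ otherwise. Moreover, for every $j\in\{2,\dots,k_{\max}-1\}$, $|\{e\in E: |e|=j\}| = d_{n+j}-d_{n+j-1}$, and $|\{e\in E:|e|=1\}|=d_{n+1}$.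
   Context: A hypergraph $\mathcal{H}=(V,E)$ on the vertex set $V=\{v_1,\dots,v_n\}$ is a family $E$ of nonempty subsets (hyperedges) of $V$; it has no repeated hyperedge if its hyperedges are pairwise distinct. The range is $k_{\max}=\max\{|e|:e\in E\}$, and $\deg(v_i)$ is the number of hyperedges containing $v_i$. Introduce $k_{\max}-1$ new pairwise distinct vertices $y_1,\dots,y_{k_{\max}-1}\notin V$. The layered uniform hypergraph of $\mathcal{H}$ is the $k_{\max}$-uniform hypergraph on $V\cup\{y_1,\dots,y_{k_{\max}-1}\}$ whose hyperedges are $\hat e = e\cup\{y_{|e|},y_{|e|+1},\dots,y_{k_{\max}-1}\}$ for $e\in E$ (so nothing is added when $|e|=k_{\max}$); $\deg(y_i)$ is the number of such hyperedges containing $y_i$. The layered e-adjacency tensor $\mathcal{A}_{\mathcal{H}}$ is the symmetric hypermatrix of order $k_{\max}$ and dimension $n+k_{\max}-1$ (indices $1,\dots,n$ correspond to $v_1,\dots,v_n$, index $n+l$ corresponds to $y_l$) defined as follows: for each hyperedge $e=\{v_{i_1},\dots,v_{i_j}\}\in E$ with $i_1<\dots<i_j$, set $i_l=n+l-1$ for $l\in\{j+1,\dots,k_{\max}\}$; then for every permutation $\sigma$ of $\{1,\dots,k_{\max}\}$, the entry with index tuple $(i_{\sigma(1)},\dots,i_{\sigma(k_{\max})})$ equals $\frac{1}{(k_{\max}-1)!}$. All other entries are $0$. *)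

theory Defs
  imports Complex_Main "HOL-Library.Multiset"
begin

(* Vertices v_1..v_n are the naturals 1..n; y_l is the natural n+l.
   A hypergraph is a set E of nonempty subsets of {1..n} (so no repeated hyperedge). *)

definition kmax :: "nat set set \<Rightarrow> nat" where
  "kmax E = Max (card ` E)"

definition layer_edge :: "nat \<Rightarrow> nat set set \<Rightarrow> nat set \<Rightarrow> nat set" where
  "layer_edge n E e = e \<union> {n + l | l. card e \<le> l \<and> l \<le> kmax E - 1}"

definition vdeg :: "nat set set \<Rightarrow> nat \<Rightarrow> nat" where
  "vdeg E i = card {e \<in> E. i \<in> e}"

definition ydeg :: "nat \<Rightarrow> nat set set \<Rightarrow> nat \<Rightarrow> nat" where
  "ydeg n E l = card {f \<in> layer_edge n E ` E. n + l \<in> f}"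

definition dseq :: "nat \<Rightarrow> nat set set \<Rightarrow> nat \<Rightarrow> nat" where
  "dseq n E i = (if i \<le> n then vdeg E i else ydeg n E (i - n))"

(* entry of the layered e-adjacency tensor at the index tuple xs (a list of length kmax):
   1/(kmax-1)! if xs is a permutation of the index tuple of some hyperedge e, i.e. of
   (i_1,...,i_j, n+j, ..., n+kmax-1), and 0 otherwise. *)
definition lay_tensor :: "nat \<Rightarrow> nat set set \<Rightarrow> nat list \<Rightarrow> real" where
  "lay_tensor n E xs =
     (if length xs = kmax E \<and> (\<exists>e\<in>E. mset xs = mset_set (layer_edge n E e))
      then 1 / fact (kmax E - 1) else 0)"

end

theory Submission
  imports Defs "HOL-Combinatorics.Multiset_Permutations"
begin

lemma mset_eq_set_iff: "finite A \<Longrightarrow> mset ys = mset_set A \<longleftrightarrow> distinct ys \<and> set ys = A"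
  by (metis mset_set_set mset_eq_mset_set_imp_distinct set_eq_iff_mset_eq_distinct finite_distinct_list)

theorem mainTheorem1:
  fixes n :: nat and E :: "nat set set"
  assumes edges: "\<forall>e\<in>E. e \<noteq> {} \<and> e \<subseteq> {1..n}"
    and nonempty: "E \<noteq> {}"
    and range: "kmax E \<ge> 2"
  shows "(\<forall>i\<in>{1..n + kmax E - 1}.
            (\<Sum>xs\<in>{xs. length xs = kmax E - 1 \<and> set xs \<subseteq> {1..n + kmax E - 1}
                       \<and> \<not> (\<forall>x\<in>set xs. x = i)}.
               lay_tensor n E (i # xs)) = real (dseq n E i))
     \<and> (\<forall>j\<in>{2..kmax E - 1}.
            int (card {e \<in> E. card e = j}) = int (dseq n E (n + j)) - int (dseq n E (n + j - 1)))
     \<and> card {e \<in> E. card e = 1} = dseq n E (n + 1)"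
proof -
  define K where "K = kmax E"
  define L where "L = layer_edge n E"
  have finE: "finite E"
    by (rule finite_subset[of E "Pow {1..n}"]) (use edges in auto)
  have esub: "e \<subseteq> {1..n}" if "e \<in> E" for e using edges that by blast
  have ene: "e \<noteq> {}" if "e \<in> E" for e using edges that by blast
  have fine: "finite e" if "e \<in> E" for e
    using edges that finite_subset by (metis finite_atLeastAtMost)
  have card1: "card e \<ge> 1" if "e \<in> E" for e
    using edges that fine[OF that] by (simp add: Suc_le_eq card_gt_0_iff)
  have cardK: "card e \<le> K" if "e \<in> E" for e
    unfolding K_def kmax_def using finE that by auto
  have L_eq: "L e = e \<union> {n + l | l. card e \<le> l \<and> l \<le> K - 1}" for e
    unfolding L_def layer_edge_def K_def by simp
  have Lsmall: "x \<in> L e \<longleftrightarrow> x \<in> e" if "e \<in> E" "x \<le> n" for e x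
    using card1[OF that(1)] that(2) unfolding L_eq by auto
  have Lbig: "x \<in> L e \<longleftrightarrow> card e \<le> x - n \<and> x - n \<le> K - 1" if "e \<in> E" "x > n" for e x
  proof -
    have "e \<subseteq> {1..n}" using edges that(1) by blast
    then have xe: "x \<notin> e" using that(2) by auto
    have "x \<in> L e \<longleftrightarrow> (\<exists>l. x = n + l \<and> card e \<le> l \<and> l \<le> K - 1)"
      unfolding L_eq using xe by blast
    also have "\<dots> \<longleftrightarrow> card e \<le> x - n \<and> x - n \<le> K - 1"
    proof
      assume "\<exists>l. x = n + l \<and> card e \<le> l \<and> l \<le> K - 1"
      then obtain l where "x = n + l" "card e \<le> l" "l \<le> K - 1" by blast
      then show "card e \<le> x - n \<and> x - n \<le> K - 1" by simp
    next
      assume "card e \<le> x - n \<and> x - n \<le> K - 1"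
      then show "\<exists>l. x = n + l \<and> card e \<le> l \<and> l \<le> K - 1"
        using that(2) by (intro exI[of _ "x - n"]) simp
    qed
    finally show ?thesis .
  qed
  have Lint: "L e \<inter> {1..n} = e" if "e \<in> E" for e
  proof -
    have "e \<subseteq> {1..n}" using edges that by blast
    moreover have "e \<subseteq> L e" unfolding L_eq by blast
    ultimately show ?thesis using Lsmall[OF that] by auto
  qed
  have injL: "inj_on L E"
    by (rule inj_onI) (metis Lint)
  have Lsub: "L e \<subseteq> {1..n + K - 1}" if "e \<in> E" for e
  proof
    fix x assume x: "x \<in> L e"
    show "x \<in> {1..n + K - 1}"
    proof (cases "x \<le> n")
      case True
      then have "x \<in> e" using Lsmall[OF that True] x by simp
      then show ?thesis using esub[OF that] True range unfolding K_def by auto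
    next
      case False
      then show ?thesis using Lbig[OF that, of x] x by auto
    qed
  qed
  have finL: "finite (L e)" if "e \<in> E" for e
    using Lsub[OF that] finite_subset by blast
  have cardL: "card (L e) = K" if "e \<in> E" for e
  proof -
    have "{n + l | l. card e \<le> l \<and> l \<le> K - 1} = (\<lambda>l. n + l) ` {card e..K - 1}"
    proof (rule equalityI)
      show "{n + l | l. card e \<le> l \<and> l \<le> K - 1} \<subseteq> (\<lambda>l. n + l) ` {card e..K - 1}" by auto
    next
      show "(\<lambda>l. n + l) ` {card e..K - 1} \<subseteq> {n + l | l. card e \<le> l \<and> l \<le> K - 1}"
      proof
        fix x assume "x \<in> (\<lambda>l. n + l) ` {card e..K - 1}"
        then obtain l where "x = n + l" "l \<in> {card e..K - 1}" by blast
        then show "x \<in> {n + l | l. card e \<le> l \<and> l \<le> K - 1}" by auto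
      qed
    qed
    then have "L e = e \<union> (\<lambda>l. n + l) ` {card e..K - 1}" unfolding L_eq by simp
    moreover have "e \<inter> (\<lambda>l. n + l) ` {card e..K - 1} = {}"
      using esub[OF that] card1[OF that] by auto
    moreover have "card ((\<lambda>l. n + l) ` {card e..K - 1}) = K - 1 + 1 - card e"
      by (simp add: card_image)
    ultimately show ?thesis
      using fine[OF that] card_Un_disjoint card1[OF that] cardK[OF that] range K_def
      by (simp add: card_Un_disjoint)
  qed
  have deg: "dseq n E i = card {e \<in> E. i \<in> L e}" if i: "i \<ge> 1" for i
  proof (cases "i \<le> n")
    case True
    then show ?thesis unfolding dseq_def vdeg_def using Lsmall[OF _ True]
      by (metis (no_types, lifting) Collect_cong)
  next
    case False
    have "{f \<in> L ` E. i \<in> f} = L ` {e \<in> E. i \<in> L e}" by auto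
    moreover have "card (L ` {e \<in> E. i \<in> L e}) = card {e \<in> E. i \<in> L e}"
      by (rule card_image) (rule inj_on_subset[OF injL], auto)
    ultimately show ?thesis using False unfolding dseq_def ydeg_def L_def by simp
  qed
  have degy: "dseq n E (n + j) = card {e \<in> E. card e \<le> j}" if "1 \<le> j" "j \<le> K - 1" for j
  proof -
    have "{e \<in> E. n + j \<in> L e} = {e \<in> E. card e \<le> j}"
      using that Lbig[of _ "n+j"] by auto
    then show ?thesis using deg[of "n+j"] that by simp
  qed
  have part1: "(\<Sum>xs\<in>{xs. length xs = K - 1 \<and> set xs \<subseteq> {1..n + K - 1}
                       \<and> \<not> (\<forall>x\<in>set xs. x = i)}. lay_tensor n E (i # xs)) = real (dseq n E i)"
    if i: "i \<in> {1..n + K - 1}" for i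
  proof -
    define S where "S = {xs. length xs = K - 1 \<and> set xs \<subseteq> {1..n + K - 1} \<and> \<not> (\<forall>x\<in>set xs. x = i)}"
    define Q where "Q e = (if i \<in> L e then permutations_of_set (L e - {i}) else {})" for e
    define c :: real where "c = 1 / fact (K - 1)"
    have finS: "finite S"
      by (rule finite_subset[OF _ finite_lists_length_eq[of "{1..n + K - 1}" "K - 1"]])
        (auto simp: S_def)
    have memQ: "xs \<in> Q e \<longleftrightarrow> mset (i # xs) = mset_set (L e)" if "e \<in> E" for e xs
      unfolding Q_def permutations_of_set_def mset_eq_set_iff[OF finL[OF that]] by auto
    have lt: "lay_tensor n E (i # xs) = (if xs \<in> (\<Union>e\<in>E. Q e) then c else 0)" if "xs \<in> S" for xs
    proof -
      have "length (i # xs) = K" using that range unfolding S_def K_def by auto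
      then show ?thesis unfolding lay_tensor_def c_def K_def[symmetric] L_def[symmetric]
        using memQ by auto
    qed
    have QS: "(\<Union>e\<in>E. Q e) \<subseteq> S"
    proof
      fix xs assume "xs \<in> (\<Union>e\<in>E. Q e)"
      then obtain e where e: "e \<in> E" "i \<in> L e" "distinct xs" "set xs = L e - {i}"
        unfolding Q_def permutations_of_set_def by (auto split: if_splits)
      have "length xs = K - 1" using e cardL[OF e(1)] finL[OF e(1)]
        by (metis card_Diff_singleton distinct_card)
      moreover have "set xs \<subseteq> {1..n + K - 1}" using e Lsub by auto
      moreover have "\<not> (\<forall>x\<in>set xs. x = i)"
      proof -
        have "length xs \<ge> 1" using calculation range K_def by simp
        then obtain x where "x \<in> set xs" by (cases xs) auto
        then show ?thesis using e by auto
      qed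
      ultimately show "xs \<in> S" unfolding S_def by simp
    qed
    have finQ: "finite (Q e)" if "e \<in> E" for e
      unfolding Q_def using finL[OF that] by (simp add: finite_permutations_of_set)
    have disj: "Q e \<inter> Q e' = {}" if "e \<in> E" "e' \<in> E" "e \<noteq> e'" for e e'
    proof (rule ccontr)
      assume "Q e \<inter> Q e' \<noteq> {}"
      then obtain xs where "xs \<in> Q e" "xs \<in> Q e'" by auto
      then have "mset_set (L e) = mset_set (L e')" using memQ that by metis
      then have "L e = L e'" using finL that by (metis finite_set_mset_mset_set)
      then show False using injL that by (meson inj_onD)
    qed
    have "(\<Sum>xs\<in>S. lay_tensor n E (i # xs)) = (\<Sum>xs\<in>S. if xs \<in> (\<Union>e\<in>E. Q e) then c else 0)"
      using lt by simp
    also have "\<dots> = c * card (\<Union>e\<in>E. Q e)"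
      using sum.inter_restrict[OF finS, of "\<lambda>_. c" "\<Union>e\<in>E. Q e", symmetric] QS
      by (simp add: Int_absorb1 Int_commute)
    also have "card (\<Union>e\<in>E. Q e) = (\<Sum>e\<in>E. card (Q e))"
      by (rule card_UN_disjoint[OF finE]) (use finQ disj in auto)
    also have "\<dots> = (\<Sum>e\<in>E. if i \<in> L e then fact (K - 1) else 0)"
    proof (rule sum.cong[OF refl])
      fix e assume e: "e \<in> E"
      show "card (Q e) = (if i \<in> L e then fact (K - 1) else 0)"
        unfolding Q_def using finL[OF e] cardL[OF e] by (simp add: card_Diff_singleton)
    qed
    also have "\<dots> = fact (K - 1) * card {e \<in> E. i \<in> L e}"
      using sum.inter_filter[OF finE, of "\<lambda>_. fact (K - 1) :: nat" "\<lambda>e. i \<in> L e"] by (simp add: mult.commute)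
    finally have "(\<Sum>xs\<in>S. lay_tensor n E (i # xs)) = real (card {e \<in> E. i \<in> L e})"
      using c_def by simp
    moreover have "dseq n E i = card {e \<in> E. i \<in> L e}" using deg i by simp
    ultimately show ?thesis unfolding S_def by simp
  qed
  show ?thesis
  proof (intro conjI ballI)
    fix i assume "i \<in> {1..n + kmax E - 1}"
    then show "(\<Sum>xs\<in>{xs. length xs = kmax E - 1 \<and> set xs \<subseteq> {1..n + kmax E - 1}
                       \<and> \<not> (\<forall>x\<in>set xs. x = i)}. lay_tensor n E (i # xs)) = real (dseq n E i)"
      using part1 unfolding K_def by simp
  next
    fix j assume j: "j \<in> {2..kmax E - 1}"
    have a: "dseq n E (n + j) = card {e \<in> E. card e \<le> j}" using j degy K_def by simp
    have b: "dseq n E (n + j - 1) = card {e \<in> E. card e \<le> j - 1}" 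
    proof -
      have "1 \<le> j - 1" "j - 1 \<le> K - 1" "n + (j - 1) = n + j - 1" using j K_def by auto
      then show ?thesis using degy[of "j - 1"] by simp
    qed
    have "{e \<in> E. card e \<le> j} = {e \<in> E. card e \<le> j - 1} \<union> {e \<in> E. card e = j}" using j by auto
    moreover have "card ({e \<in> E. card e \<le> j - 1} \<union> {e \<in> E. card e = j}) =
        card {e \<in> E. card e \<le> j - 1} + card {e \<in> E. card e = j}"
      by (rule card_Un_disjoint) (use finE j in auto)
    ultimately show "int (card {e \<in> E. card e = j}) = int (dseq n E (n + j)) - int (dseq n E (n + j - 1))"
      using a b by simp
  next
    have "dseq n E (n + 1) = card {e \<in> E. card e \<le> 1}" using degy[of 1] range K_def by simp
    also have "{e \<in> E. card e \<le> 1} = {e \<in> E. card e = 1}" using card1 by force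
    finally show "card {e \<in> E. card e = 1} = dseq n E (n + 1)" by simp
  qed
qed

end
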